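(* Let $d\ge 2$ and let $\rho$ be a density operator on $\mathbb{C}^d$. Suppose there exists a diagonal unitary $U$ (in the computational basis) such that $\rho'=U^\dagger\rho U$ has entries $\rho'_{ij}=|\rho_{ij}|$ for all $i,j$. Then $$C_{\mathcal{F}}(\rho)=\overline{C}_{\mathcal{R}}(\rho)=\overline{C}_{l_1}(\rho).$$
   Context: Fix the computational basis $\{|i\rangle\}_{i=0}^{d-1}$ of $\mathbb{C}^d$ as the incoherent basis. Let $\mathcal{D}(\mathbb{C}^d)$ be the set of density operators, $\Delta(\rho)=\sum_i|i\rangle\langle i|\rho|i\rangle\langle i|$, and $\mathcal{I}=\{\rho\in\mathcal{D}(\mathbb{C}^d):\rho=\Delta(\rho)\}$ the incoherent (diagonal) states. Let $|\phi^+\rangle=\frac{1}{\sqrt d}\sum_{i=0}^{d-1}|i\rangle$ and let $\mathcal{U}_d$ be the set of diagonal unitary matrices. The quantum coherence fraction is $C_{\mathcal{F}}(\rho)=\max_{U\in\mathcal{U}_d}\langle\phi^+|U^\dagger\rho U|\phi^+\rangle$ (equivalently, the maximum of $\langle\phi|\rho|\phi\rangle$ over maximally coherent states $|\phi\rangle$, i.e. states of the form $\frac1{\sqrt d}\sum_i e^{\mathrm{i}\theta_i}|i\rangle$). The $l_1$ norm of coherence is $C_{l_1}(\rho)=\sum_{i\ne j}|\rho_{ij}|$, and the robustness of coherence is $C_{\mathcal{R}}(\rho)=\min\{s\ge0: \exists\tau\in\mathcal{D}(\mathbb{C}^d),\ (\rho+s\tau)/(1+s)\in\mathcal{I}\}$.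 The normalized versions are $\overline{C}_{l_1}(\rho)=(1+C_{l_1}(\rho))/d$ and $\overline{C}_{\mathcal{R}}(\rho)=(1+C_{\mathcal{R}}(\rho))/d$. *)

theory Defs
  imports "HOL-Analysis.Analysis"
begin

text \<open>Operators on C^d are complex matrices indexed by a finite type 'n, d = CARD('n);
  the computational basis is the standard basis indexed by 'n.\<close>

definition adjoint_mat :: "complex^'n^'n \<Rightarrow> complex^'n^'n" where
  "adjoint_mat A = (\<chi> i j. cnj (A $ j $ i))"

definition hermitian_mat :: "complex^'n^'n \<Rightarrow> bool" where
  "hermitian_mat A \<longleftrightarrow> adjoint_mat A = A"

definition psd_mat :: "complex^'n^'n \<Rightarrow> bool" where
  "psd_mat A \<longleftrightarrow> hermitian_mat A \<and>
     (\<forall>v :: complex^'n. 0 \<le> Re (\<Sum>i\<in>UNIV. \<Sum>j\<in>UNIV. cnj (v $ i) * A $ i $ j * v $ j))"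

definition density_op :: "complex^'n^'n \<Rightarrow> bool" where
  "density_op A \<longleftrightarrow> psd_mat A \<and> trace A = 1"

definition diag_mat :: "complex^'n^'n \<Rightarrow> bool" where
  "diag_mat A \<longleftrightarrow> (\<forall>i j. i \<noteq> j \<longrightarrow> A $ i $ j = 0)"

definition incoherent :: "complex^'n^'n \<Rightarrow> bool" where
  "incoherent A \<longleftrightarrow> density_op A \<and> diag_mat A"

definition unitary_mat :: "complex^'n^'n \<Rightarrow> bool" where
  "unitary_mat U \<longleftrightarrow> U ** adjoint_mat U = mat 1 \<and> adjoint_mat U ** U = mat 1"

definition diag_unitary :: "complex^'n^'n \<Rightarrow> bool" where
  "diag_unitary U \<longleftrightarrow> unitary_mat U \<and> diag_mat U"

text \<open>\<langle>\<phi>+|A|\<phi>+\<rangle> with \<phi>+ = (1/sqrt d) \<Sum>i |i\<rangle>.\<close>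
definition phi_plus_exp :: "complex^'n^'n \<Rightarrow> complex" where
  "phi_plus_exp A = (\<Sum>i\<in>UNIV. \<Sum>j\<in>UNIV. A $ i $ j) / of_nat CARD('n)"

text \<open>Coherence fraction (the value is real for Hermitian \<rho>; we take the real part).\<close>
definition coh_fraction :: "complex^'n^'n \<Rightarrow> real" where
  "coh_fraction \<rho> = (SUP U\<in>{U. diag_unitary U}. Re (phi_plus_exp (adjoint_mat U ** \<rho> ** U)))"

definition coh_l1 :: "complex^'n^'n \<Rightarrow> real" where
  "coh_l1 \<rho> = (\<Sum>i\<in>UNIV. \<Sum>j\<in>UNIV. if i \<noteq> j then cmod (\<rho> $ i $ j) else 0)"

definition coh_robustness :: "complex^'n^'n \<Rightarrow> real" where
  "coh_robustness \<rho> = Inf {s::real. 0 \<le> s \<and> (\<exists>\<tau>. density_op \<tau> \<and>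
       incoherent (\<chi> i j. (\<rho> $ i $ j + complex_of_real s * \<tau> $ i $ j) / (1 + complex_of_real s)))}"

definition coh_l1_norm :: "complex^'n^'n \<Rightarrow> real" where
  "coh_l1_norm \<rho> = (1 + coh_l1 \<rho>) / real CARD('n)"

definition coh_robustness_norm :: "complex^'n^'n \<Rightarrow> real" where
  "coh_robustness_norm \<rho> = (1 + coh_robustness \<rho>) / real CARD('n)"

end

theory Submission
  imports Defs
begin

definition qf :: "complex^'n^'n \<Rightarrow> complex^'n \<Rightarrow> complex" where
  "qf A v = (\<Sum>i\<in>UNIV. \<Sum>j\<in>UNIV. cnj (v $ i) * A $ i $ j * v $ j)"

lemma herm_entry:
  assumes "hermitian_mat A" shows "A $ j $ i = cnj (A $ i $ j)"
proof -
  have "adjoint_mat A $ j $ i = A $ j $ i" using assms unfolding hermitian_mat_def by simp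
  then show ?thesis unfolding adjoint_mat_def by simp
qed

lemma diag_unitary_mult:
  assumes "diag_mat U"
  shows "(adjoint_mat U ** A ** U) $ i $ j = cnj (U $ i $ i) * A $ i $ j * U $ j $ j"
proof -
  have adj: "adjoint_mat U $ i $ k = (if k = i then cnj (U $ i $ i) else 0)" for i k
    using assms unfolding adjoint_mat_def diag_mat_def by auto
  have u: "k \<noteq> j \<Longrightarrow> U $ k $ j = 0" for k j
    using assms unfolding diag_mat_def by auto
  have "(adjoint_mat U ** A) $ i $ k = (\<Sum>l\<in>UNIV. if l = i then cnj (U $ i $ i) * A $ i $ k else 0)" for k
    unfolding matrix_matrix_mult_def vec_lambda_beta by (rule sum.cong) (auto simp: adj)
  then have 1: "(adjoint_mat U ** A) $ i $ k = cnj (U $ i $ i) * A $ i $ k" for k by simp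
  have "(adjoint_mat U ** A ** U) $ i $ j = (\<Sum>k\<in>UNIV. if k = j then cnj (U $ i $ i) * A $ i $ j * U $ j $ j else 0)"
    unfolding matrix_matrix_mult_def[of "adjoint_mat U ** A"] vec_lambda_beta 1 by (rule sum.cong) (auto simp: u)
  then show ?thesis by simp
qed

lemma diag_unitary_norm:
  assumes "diag_unitary U" shows "cnj (U $ i $ i) * U $ i $ i = 1"
proof -
  have d: "diag_mat U" and e: "adjoint_mat U ** U = mat 1"
    using assms unfolding diag_unitary_def unitary_mat_def by auto
  have "(adjoint_mat U ** U) $ i $ i = 1" using e by (simp add: mat_def)
  moreover have "(adjoint_mat U ** U) $ i $ i = (\<Sum>k\<in>UNIV. cnj (U $ k $ i) * U $ k $ i)"
    unfolding matrix_matrix_mult_def adjoint_mat_def by simp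
  moreover have "\<dots> = (\<Sum>k\<in>UNIV. if k = i then cnj (U $ i $ i) * U $ i $ i else 0)"
    by (rule sum.cong, auto simp: d[unfolded diag_mat_def])
  moreover have "\<dots> = cnj (U $ i $ i) * U $ i $ i" by simp
  ultimately show ?thesis by simp
qed

lemma quad_le:
  fixes c :: "'n::finite \<Rightarrow> 'n \<Rightarrow> real"
  assumes c0: "\<And>i j. c i j \<ge> 0" and cs: "\<And>i j. c i j = c j i"
  shows "(\<Sum>i\<in>UNIV. \<Sum>j\<in>UNIV. c i j * a i * a j) \<le> (\<Sum>i\<in>UNIV. (\<Sum>j\<in>UNIV. c i j) * (a i)^2)"
proof -
  have t: "c i j * a i * a j \<le> (c i j * (a i)^2 + c i j * (a j)^2) / 2" for i j
  proof -
    have "0 \<le> c i j * (a i - a j)^2" using c0 by simp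
    then show ?thesis by (simp add: power2_eq_square algebra_simps)
  qed
  have "(\<Sum>i\<in>UNIV. \<Sum>j\<in>UNIV. c i j * a i * a j) \<le> (\<Sum>i\<in>UNIV. \<Sum>j\<in>UNIV. (c i j * (a i)^2 + c i j * (a j)^2) / 2)"
    by (intro sum_mono t)
  also have "\<dots> = ((\<Sum>i\<in>UNIV. \<Sum>j\<in>UNIV. c i j * (a i)^2) + (\<Sum>i\<in>UNIV. \<Sum>j\<in>UNIV. c i j * (a j)^2)) / 2"
    by (simp add: sum.distrib add_divide_distrib sum_divide_distrib[symmetric])
  finally have f: "(\<Sum>i\<in>UNIV. \<Sum>j\<in>UNIV. c i j * a i * a j) \<le> ((\<Sum>i\<in>UNIV. \<Sum>j\<in>UNIV. c i j * (a i)^2) + (\<Sum>i\<in>UNIV. \<Sum>j\<in>UNIV. c i j * (a j)^2)) / 2" .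
  have e1: "(\<Sum>i\<in>UNIV. \<Sum>j\<in>UNIV. c i j * (a j)^2) = (\<Sum>j\<in>UNIV. \<Sum>i\<in>UNIV. c j i * (a j)^2)"
    by (subst sum.swap) (simp add: cs)
  have e2: "(\<Sum>j\<in>UNIV. \<Sum>i\<in>UNIV. c j i * (a j)^2) = (\<Sum>i\<in>UNIV. (\<Sum>j\<in>UNIV. c i j) * (a i)^2)"
    by (simp add: sum_distrib_right)
  have e3: "(\<Sum>i\<in>UNIV. \<Sum>j\<in>UNIV. c i j * (a i)^2) = (\<Sum>i\<in>UNIV. (\<Sum>j\<in>UNIV. c i j) * (a i)^2)"
    by (simp add: sum_distrib_right)
  show ?thesis using f unfolding e1 e2 e3 by simp
qed

lemma qf_lin:
  assumes "\<And>i j. A $ i $ j = a * B $ i $ j + b * C $ i $ j"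
  shows "qf A v = a * qf B v + b * qf C v"
  unfolding qf_def assms by (simp add: sum.distrib sum_distrib_left algebra_simps)

lemma qf_diag:
  assumes "diag_mat A"
  shows "qf A v = (\<Sum>i\<in>UNIV. cnj (v $ i) * A $ i $ i * v $ i)"
proof -
  have "qf A v = (\<Sum>i\<in>UNIV. \<Sum>j\<in>UNIV. if j = i then cnj (v $ i) * A $ i $ i * v $ i else 0)"
    unfolding qf_def using assms unfolding diag_mat_def by (intro sum.cong) auto
  then show ?thesis by simp
qed

lemma density_diag:
  assumes "density_op A"
  shows "A $ i $ i = complex_of_real (Re (A $ i $ i))" and "0 \<le> Re (A $ i $ i)"
proof -
  have h: "hermitian_mat A" and p: "\<And>v. 0 \<le> Re (qf A v)"
    using assms unfolding density_op_def psd_mat_def qf_def by auto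
  have "A $ i $ i = cnj (A $ i $ i)" using herm_entry[OF h, of i i] by simp
  then show "A $ i $ i = complex_of_real (Re (A $ i $ i))"
    by (metis Reals_cnj_iff complex_is_Real_iff of_real_Re)
  have "qf A (axis i 1) = (\<Sum>k\<in>UNIV. \<Sum>j\<in>UNIV. if k = i then (if j = i then A $ i $ i else 0) else 0)"
    unfolding qf_def axis_def by (intro sum.cong) auto
  also have "\<dots> = (\<Sum>k\<in>UNIV. if k = i then A $ i $ i else 0)"
    by (rule sum.cong) auto
  also have "\<dots> = A $ i $ i"
    by simp
  finally show "0 \<le> Re (A $ i $ i)" using p[of "axis i 1"] by simp
qed

lemma density_sum_cmod:
  assumes "density_op A"
  shows "(\<Sum>i\<in>UNIV. \<Sum>j\<in>UNIV. cmod (A $ i $ j)) = 1 + coh_l1 A"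
proof -
  have "(\<Sum>j\<in>UNIV. cmod (A $ i $ j)) = (\<Sum>j\<in>UNIV. (if j = i then cmod (A $ i $ i) else 0) + (if i \<noteq> j then cmod (A $ i $ j) else 0))" for i
    by (rule sum.cong) auto
  then have 1: "(\<Sum>j\<in>UNIV. cmod (A $ i $ j)) = cmod (A $ i $ i) + (\<Sum>j\<in>UNIV. if i \<noteq> j then cmod (A $ i $ j) else 0)" for i
    by (simp add: sum.distrib)
  have 2: "cmod (A $ i $ i) = Re (A $ i $ i)" for i
    using density_diag[OF assms, of i] by (metis norm_of_real abs_of_nonneg)
  have "(\<Sum>i\<in>UNIV. Re (A $ i $ i)) = Re (trace A)" unfolding trace_def by (simp add: Re_sum)
  also have "\<dots> = 1" using assms unfolding density_op_def by simp
  finally have 3: "(\<Sum>i\<in>UNIV. Re (A $ i $ i)) = 1" .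
  show ?thesis unfolding 1 2 sum.distrib 3 coh_l1_def by simp
qed

lemma unit_cmod:
  assumes "diag_unitary U" shows "cmod (U $ i $ i) = 1"
proof -
  have "cmod (cnj (U $ i $ i) * U $ i $ i) = 1" using diag_unitary_norm[OF assms, of i] by simp
  then have "cmod (U $ i $ i) * cmod (U $ i $ i) = 1" by (simp add: norm_mult)
  then have "(cmod (U $ i $ i))^2 = 1" by (simp add: power2_eq_square)
  then show ?thesis using norm_ge_zero[of "U $ i $ i"] by (auto simp: power2_eq_1_iff)
qed

lemma dd_psd:
  assumes h: "hermitian_mat A"
  shows "0 \<le> Re (qf (\<chi> i j. if i = j then complex_of_real (\<Sum>k\<in>UNIV. if i \<noteq> k then cmod (A $ i $ k) else 0) else - A $ i $ j) v)"
proof -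
  define c where "c i j = (if i \<noteq> j then cmod (A $ i $ j) else 0)" for i j
  define r where "r i = (\<Sum>k\<in>UNIV. c i k)" for i
  define K :: "complex^'a^'a" where "K = (\<chi> i j. if i = j then complex_of_real (\<Sum>k\<in>UNIV. if i \<noteq> k then cmod (A $ i $ k) else 0) else - A $ i $ j)"
  have K: "K $ i $ j = (if i = j then complex_of_real (r i) else - A $ i $ j)" for i j
    unfolding K_def r_def c_def by simp
  have c0: "c i j \<ge> 0" for i j unfolding c_def by simp
  have cs: "c i j = c j i" for i j unfolding c_def using herm_entry[OF h, of i j] by auto
  have q: "(\<Sum>i\<in>UNIV. \<Sum>j\<in>UNIV. c i j * cmod (v $ i) * cmod (v $ j)) \<le> (\<Sum>i\<in>UNIV. r i * (cmod (v $ i))^2)"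
    using quad_le[where c=c and a="\<lambda>i. cmod (v $ i)", OF c0 cs] unfolding r_def by simp
  have "Re (qf K v) = (\<Sum>i\<in>UNIV. \<Sum>j\<in>UNIV. Re (cnj (v $ i) * K $ i $ j * v $ j))"
    unfolding qf_def by (simp add: Re_sum)
  also have "\<dots> \<ge> (\<Sum>i\<in>UNIV. \<Sum>j\<in>UNIV. (if j = i then r i * (cmod (v $ i))^2 else 0) - c i j * cmod (v $ i) * cmod (v $ j))"
  proof (intro sum_mono)
    fix i j
    show "(if j = i then r i * (cmod (v $ i))^2 else 0) - c i j * cmod (v $ i) * cmod (v $ j) \<le> Re (cnj (v $ i) * K $ i $ j * v $ j)"
    proof (cases "i = j")
      case True
      have "cnj (v $ i) * v $ i = complex_of_real ((cmod (v $ i))^2)"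
        by (simp add: complex_norm_square[symmetric] mult.commute)
      then have "cnj (v $ i) * K $ i $ j * v $ j = complex_of_real (r i * (cmod (v $ i))^2)"
        using True K[of i i] by (metis mult.commute mult.left_commute of_real_mult)
      then have "Re (cnj (v $ i) * K $ i $ j * v $ j) = r i * (cmod (v $ i))^2"
        by (simp only: Re_complex_of_real)
      then show ?thesis using True c_def by simp
    next
      case False
      have "- Re (cnj (v $ i) * A $ i $ j * v $ j) \<ge> - cmod (cnj (v $ i) * A $ i $ j * v $ j)"
        using complex_Re_le_cmod[of "cnj (v $ i) * A $ i $ j * v $ j"] by linarith
      moreover have "cmod (cnj (v $ i) * A $ i $ j * v $ j) = c i j * cmod (v $ i) * cmod (v $ j)"
        using False unfolding c_def by (simp add: norm_mult)
      ultimately show ?thesis using False K[of i j] by simp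
    qed
  qed
  finally have "Re (qf K v) \<ge> (\<Sum>i\<in>UNIV. \<Sum>j\<in>UNIV. (if j = i then r i * (cmod (v $ i))^2 else 0)) - (\<Sum>i\<in>UNIV. \<Sum>j\<in>UNIV. c i j * cmod (v $ i) * cmod (v $ j))"
    by (simp add: sum_subtractf)
  then have "Re (qf K v) \<ge> (\<Sum>i\<in>UNIV. r i * (cmod (v $ i))^2) - (\<Sum>i\<in>UNIV. \<Sum>j\<in>UNIV. c i j * cmod (v $ i) * cmod (v $ j))"
    by simp
  with q show ?thesis unfolding K_def by simp
qed

lemma psd_qf: "psd_mat A \<longleftrightarrow> hermitian_mat A \<and> (\<forall>v. 0 \<le> Re (qf A v))"
  unfolding psd_mat_def qf_def by simp

lemma herm_intro:
  assumes "\<And>i j. A $ j $ i = cnj (A $ i $ j)" shows "hermitian_mat A"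
  unfolding hermitian_mat_def adjoint_mat_def by (simp add: vec_eq_iff assms[symmetric])

lemma diag_density:
  assumes dA: "diag_mat A" and a: "\<And>i. A $ i $ i = complex_of_real (a i)" and a0: "\<And>i. a i \<ge> 0"
    and tr: "(\<Sum>i\<in>UNIV. a i) = 1"
  shows "density_op A"
proof -
  have h: "hermitian_mat A"
  proof (rule herm_intro)
    fix i j show "A $ j $ i = cnj (A $ i $ j)"
      using dA a[of i] unfolding diag_mat_def by (cases "i = j") auto
  qed
  have "0 \<le> Re (qf A v)" for v
  proof -
    have t: "cnj (v $ i) * A $ i $ i * v $ i = complex_of_real (a i * (cmod (v $ i))^2)" for i
    proof -
      have "cnj (v $ i) * v $ i = complex_of_real ((cmod (v $ i))^2)"
        by (simp add: complex_norm_square[symmetric] mult.commute)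
      then show ?thesis using a[of i] by (metis mult.commute mult.left_commute of_real_mult)
    qed
    have "Re (qf A v) = (\<Sum>i\<in>UNIV. a i * (cmod (v $ i))^2)"
      unfolding qf_diag[OF dA] t by (simp add: Re_sum)
    also have "\<dots> \<ge> 0" using a0 by (intro sum_nonneg) simp
    finally show ?thesis .
  qed
  moreover have "trace A = 1" unfolding trace_def a using tr
    by (metis of_real_1 of_real_sum)
  ultimately show ?thesis unfolding density_op_def psd_qf using h by simp
qed

theorem theorem1:
  fixes \<rho> :: "complex^'n^'n"
  assumes "CARD('n) \<ge> 2"
    and "density_op \<rho>"
    and "\<exists>U. diag_unitary U \<and>
           (\<forall>i j. (adjoint_mat U ** \<rho> ** U) $ i $ j = complex_of_real (cmod (\<rho> $ i $ j)))"
  shows "coh_fraction \<rho> = coh_robustness_norm \<rho> \<and> coh_robustness_norm \<rho> = coh_l1_norm \<rho>"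
proof -
  note dens = assms(2)
  obtain U where dU: "diag_unitary U" and hU: "\<And>i j. (adjoint_mat U ** \<rho> ** U) $ i $ j = complex_of_real (cmod (\<rho> $ i $ j))"
    using assms(3) by blast
  have dmU: "diag_mat U" using dU unfolding diag_unitary_def by simp
  define L where "L = coh_l1 \<rho>"
  have S1: "(\<Sum>i\<in>UNIV. \<Sum>j\<in>UNIV. cmod (\<rho> $ i $ j)) = 1 + L"
    using density_sum_cmod[OF dens] unfolding L_def .
  have herm: "hermitian_mat \<rho>" using dens unfolding density_op_def psd_mat_def by simp
  have L0: "0 \<le> L" unfolding L_def coh_l1_def by (intro sum_nonneg) auto
  have F: "coh_fraction \<rho> = (1 + L) / real CARD('n)"
  proof -
    have mem: "(1 + L) / real CARD('n) \<in> (\<lambda>U. Re (phi_plus_exp (adjoint_mat U ** \<rho> ** U))) ` {U. diag_unitary U}"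
    proof
      have "phi_plus_exp (adjoint_mat U ** \<rho> ** U) = complex_of_real (\<Sum>i\<in>UNIV. \<Sum>j\<in>UNIV. cmod (\<rho> $ i $ j)) / of_nat CARD('n)"
        unfolding phi_plus_exp_def hU by simp
      then show "(1 + L) / real CARD('n) = Re (phi_plus_exp (adjoint_mat U ** \<rho> ** U))"
        unfolding S1 by simp
    qed (use dU in simp)
    have bnd: "x \<le> (1 + L) / real CARD('n)" if xin: "x \<in> (\<lambda>U. Re (phi_plus_exp (adjoint_mat U ** \<rho> ** U))) ` {U. diag_unitary U}" for x
    proof -
      obtain V where dV: "diag_unitary V" and x: "x = Re (phi_plus_exp (adjoint_mat V ** \<rho> ** V))"
        using xin by blast
      have dmV: "diag_mat V" using dV unfolding diag_unitary_def by simp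
      have "Re (\<Sum>i\<in>UNIV. \<Sum>j\<in>UNIV. (adjoint_mat V ** \<rho> ** V) $ i $ j) = (\<Sum>i\<in>UNIV. \<Sum>j\<in>UNIV. Re ((adjoint_mat V ** \<rho> ** V) $ i $ j))"
        by (simp add: Re_sum)
      also have "\<dots> \<le> (\<Sum>i\<in>UNIV. \<Sum>j\<in>UNIV. cmod (\<rho> $ i $ j))"
      proof (intro sum_mono)
        fix i j
        have "Re ((adjoint_mat V ** \<rho> ** V) $ i $ j) \<le> cmod ((adjoint_mat V ** \<rho> ** V) $ i $ j)"
          by (rule complex_Re_le_cmod)
        also have "\<dots> = cmod (\<rho> $ i $ j)"
          unfolding diag_unitary_mult[OF dmV] by (simp add: norm_mult unit_cmod[OF dV])
        finally show "Re ((adjoint_mat V ** \<rho> ** V) $ i $ j) \<le> cmod (\<rho> $ i $ j)" .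
      qed
      finally have "Re (\<Sum>i\<in>UNIV. \<Sum>j\<in>UNIV. (adjoint_mat V ** \<rho> ** V) $ i $ j) \<le> 1 + L" using S1 by simp
      then show ?thesis unfolding x phi_plus_exp_def by (simp add: divide_right_mono)
    qed
    show ?thesis unfolding coh_fraction_def by (rule cSup_eq_maximum[OF mem bnd])
  qed
  define S where "S = {s::real. 0 \<le> s \<and> (\<exists>\<tau>. density_op \<tau> \<and>
       incoherent (\<chi> i j. (\<rho> $ i $ j + complex_of_real s * \<tau> $ i $ j) / (1 + complex_of_real s)))}"
  have lower: "L \<le> s" if sS: "s \<in> S" for s
  proof -
    obtain \<tau> where s0: "0 \<le> s" and d\<tau>: "density_op \<tau>"
      and inc: "incoherent (\<chi> i j. (\<rho> $ i $ j + complex_of_real s * \<tau> $ i $ j) / (1 + complex_of_real s))"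
      using sS unfolding S_def by blast
    define M :: "complex^'n^'n" where "M = (\<chi> i j. (\<rho> $ i $ j + complex_of_real s * \<tau> $ i $ j) / (1 + complex_of_real s))"
    have dM: "density_op M" and diM: "diag_mat M" using inc unfolding M_def[symmetric] incoherent_def by auto
    define v :: "complex^'n" where "v = (\<chi> i. U $ i $ i)"
    have ne: "1 + complex_of_real s \<noteq> 0"
      using s0 by (metis add_nonneg_eq_0_iff of_real_1 of_real_add of_real_eq_0_iff zero_le_one one_neq_zero)
    have rel: "\<rho> $ i $ j = (1 + complex_of_real s) * M $ i $ j + (- complex_of_real s) * \<tau> $ i $ j" for i j
      unfolding M_def using ne by (simp add: field_simps)
    have q1: "qf \<rho> v = complex_of_real (1 + L)"
    proof -
      have "qf \<rho> v = (\<Sum>i\<in>UNIV. \<Sum>j\<in>UNIV. (adjoint_mat U ** \<rho> ** U) $ i $ j)"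
        unfolding qf_def v_def diag_unitary_mult[OF dmU] by (simp add: mult.assoc)
      also have "\<dots> = complex_of_real (\<Sum>i\<in>UNIV. \<Sum>j\<in>UNIV. cmod (\<rho> $ i $ j))"
        unfolding hU by simp
      finally show ?thesis unfolding S1 .
    qed
    have q2: "qf M v = 1"
    proof -
      have "qf M v = (\<Sum>i\<in>UNIV. M $ i $ i)"
        unfolding qf_diag[OF diM] v_def
      proof (rule sum.cong)
        fix i
        have "cnj (U $ i $ i) * M $ i $ i * U $ i $ i = (cnj (U $ i $ i) * U $ i $ i) * M $ i $ i"
          by (simp add: mult.commute mult.left_commute)
        then show "cnj ((\<chi> i. U $ i $ i) $ i) * M $ i $ i * (\<chi> i. U $ i $ i) $ i = M $ i $ i"
          using diag_unitary_norm[OF dU, of i] by simp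
      qed simp
      also have "\<dots> = 1" using dM unfolding density_op_def trace_def by simp
      finally show ?thesis .
    qed
    have q3: "0 \<le> Re (qf \<tau> v)" using d\<tau> unfolding density_op_def psd_qf by simp
    have "qf \<rho> v = (1 + complex_of_real s) * qf M v + (- complex_of_real s) * qf \<tau> v"
      by (rule qf_lin[OF rel])
    then have "Re (complex_of_real (1 + L)) = Re ((1 + complex_of_real s) * 1 + (- complex_of_real s) * qf \<tau> v)"
      unfolding q1 q2 by simp
    then have "1 + L = (1 + s) - s * Re (qf \<tau> v)" by simp
    moreover have "0 \<le> s * Re (qf \<tau> v)" using s0 q3 by simp
    ultimately show ?thesis by linarith
  qed
  have memS: "L \<in> S"
  proof (cases "L = 0")
    case True
    have z: "\<rho> $ i $ j = 0" if ij: "i \<noteq> j" for i j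
    proof -
      have nn: "\<And>i j. 0 \<le> (if i \<noteq> j then cmod (\<rho> $ i $ j) else 0)" by simp
      have "(\<Sum>i\<in>UNIV. \<Sum>j\<in>UNIV. if i \<noteq> j then cmod (\<rho> $ i $ j) else 0) = 0"
        using True unfolding L_def coh_l1_def .
      then have "\<forall>i\<in>UNIV. (\<Sum>j\<in>UNIV. if i \<noteq> j then cmod (\<rho> $ i $ j) else 0) = 0"
        by (subst (asm) sum_nonneg_eq_0_iff) (auto intro: sum_nonneg)
      then have "(\<Sum>j\<in>UNIV. if i \<noteq> j then cmod (\<rho> $ i $ j) else 0) = 0" by simp
      then have "\<forall>j\<in>UNIV. (if i \<noteq> j then cmod (\<rho> $ i $ j) else 0) = 0"
        by (subst (asm) sum_nonneg_eq_0_iff) auto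
      then show ?thesis using ij by (metis UNIV_I norm_eq_zero)
    qed
    have eq: "(\<chi> i j. (\<rho> $ i $ j + complex_of_real 0 * \<rho> $ i $ j) / (1 + complex_of_real 0)) = \<rho>"
      by (simp add: vec_eq_iff)
    have "incoherent \<rho>" unfolding incoherent_def diag_mat_def using dens z by auto
    then show ?thesis unfolding S_def True using dens eq by auto
  next
    case False
    then have Lp: "0 < L" using L0 by simp
    define r where "r i = (\<Sum>k\<in>UNIV. if i \<noteq> k then cmod (\<rho> $ i $ k) else 0)" for i
    define K :: "complex^'n^'n" where "K = (\<chi> i j. if i = j then complex_of_real (\<Sum>k\<in>UNIV. if i \<noteq> k then cmod (\<rho> $ i $ k) else 0) else - \<rho> $ i $ j)"
    have Ke: "K $ i $ j = (if i = j then complex_of_real (r i) else - \<rho> $ i $ j)" for i j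
      unfolding K_def r_def by simp
    define \<tau> :: "complex^'n^'n" where "\<tau> = (\<chi> i j. K $ i $ j / complex_of_real L)"
    have sr: "(\<Sum>i\<in>UNIV. r i) = L" unfolding r_def L_def coh_l1_def by simp
    have trr: "(\<Sum>i\<in>UNIV. Re (\<rho> $ i $ i)) = 1"
    proof -
      have "(\<Sum>i\<in>UNIV. Re (\<rho> $ i $ i)) = Re (trace \<rho>)" unfolding trace_def by (simp add: Re_sum)
      also have "\<dots> = 1" using dens unfolding density_op_def by simp
      finally show ?thesis .
    qed
    have d\<tau>: "density_op \<tau>"
    proof -
      have h: "hermitian_mat \<tau>"
      proof (rule herm_intro)
        fix i j
        have "K $ j $ i = cnj (K $ i $ j)"
          unfolding Ke using herm_entry[OF herm, of i j] by auto
        then show "\<tau> $ j $ i = cnj (\<tau> $ i $ j)" unfolding \<tau>_def by simp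
      qed
      have "0 \<le> Re (qf \<tau> v)" for v
      proof -
        have "qf \<tau> v = (1 / complex_of_real L) * qf K v + 0 * qf K v"
          by (rule qf_lin) (simp add: \<tau>_def)
        then have "Re (qf \<tau> v) = Re (qf K v) / L" by simp
        moreover have "0 \<le> Re (qf K v)" unfolding K_def by (rule dd_psd[OF herm])
        ultimately show ?thesis using Lp by simp
      qed
      moreover have "trace \<tau> = 1"
      proof -
        have "trace \<tau> = (\<Sum>i\<in>UNIV. complex_of_real (r i)) / complex_of_real L"
          unfolding trace_def \<tau>_def Ke by (simp add: sum_divide_distrib)
        also have "\<dots> = 1" unfolding of_real_sum[symmetric] sr using Lp by simp
        finally show ?thesis .
      qed
      ultimately show ?thesis unfolding density_op_def psd_qf using h by simp
    qed
    define a where "a i = (Re (\<rho> $ i $ i) + r i) / (1 + L)" for i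
    define M :: "complex^'n^'n" where "M = (\<chi> i j. (\<rho> $ i $ j + complex_of_real L * \<tau> $ i $ j) / (1 + complex_of_real L))"
    have ne: "complex_of_real L \<noteq> 0" using Lp by simp
    have Me: "M $ i $ j = (if i = j then complex_of_real (a i) else 0)" for i j
    proof (cases "i = j")
      case True
      have "\<rho> $ i $ i = complex_of_real (Re (\<rho> $ i $ i))" by (rule density_diag(1)[OF dens])
      then have "M $ i $ i = (complex_of_real (Re (\<rho> $ i $ i)) + complex_of_real (r i)) / (1 + complex_of_real L)"
        unfolding M_def \<tau>_def Ke using ne by simp
      also have "\<dots> = complex_of_real (a i)" unfolding a_def by simp
      finally show ?thesis using True by simp
    next
      case False
      then show ?thesis unfolding M_def \<tau>_def Ke using ne by simp
    qed
    have dM: "diag_mat M" unfolding diag_mat_def Me by simp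
    have a0: "a i \<ge> 0" for i
    proof -
      have "0 \<le> Re (\<rho> $ i $ i)" by (rule density_diag(2)[OF dens])
      moreover have "0 \<le> r i" unfolding r_def by (intro sum_nonneg) auto
      ultimately show ?thesis unfolding a_def using Lp by simp
    qed
    have sa: "(\<Sum>i\<in>UNIV. a i) = 1"
    proof -
      have "(\<Sum>i\<in>UNIV. a i) = ((\<Sum>i\<in>UNIV. Re (\<rho> $ i $ i)) + (\<Sum>i\<in>UNIV. r i)) / (1 + L)"
        unfolding a_def by (simp add: sum_divide_distrib[symmetric] sum.distrib)
      also have "\<dots> = 1" unfolding trr sr using Lp by simp
      finally show ?thesis .
    qed
    have "density_op M" by (rule diag_density[OF dM _ a0 sa]) (simp add: Me)
    then have "incoherent M" using dM unfolding incoherent_def by simp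
    then show ?thesis unfolding S_def M_def using L0 d\<tau> by blast
  qed
  have R: "coh_robustness \<rho> = L"
    unfolding coh_robustness_def S_def[symmetric] by (rule cInf_eq_minimum[OF memS lower])
  show ?thesis unfolding coh_robustness_norm_def coh_l1_norm_def F R L_def by simp
qed

end
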